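(* Let $A$ and $B$ be nonzero integers, let $g=\gcd(A,B)$, and write $A=ga$, $B=gb$ (so $\gcd(a,b)=1$). For an integer $L\ge 2$, let $\ell=\prod_{p\nmid g}p^{\nu_p(L)}$ and $\gamma(L)=\max_{p\mid g}\left\lceil \nu_p(L)/\nu_p(g)\right\rceil$ (with $\gamma(L)=0$ if $g=1$). Then the following are equivalent: (1) $L\in G_{(A,B)}$; (2) there exists a positive integer $\kappa\ge \gamma(L)$ with $\ell\mid(a^{\kappa}+b^{\kappa})$; (3) $\ell\in G_{(a,b)}$.
   Context: For nonzero integers $x,y$, $G_{(x,y)}$ denotes the set of positive integers $n$ for which there exists a positive integer $k$ with $n\mid(x^k+y^k)$ ("good integers" with respect to $x$ and $y$). For a prime $p$ and a nonzero integer $n$, $\nu_p(n)$ is the $p$-adic valuation (exponent of $p$ in $n$). Products and maxima indexed by $p$ range over primes. $\lceil x\rceil$ is the least integer $\ge x$. *)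

theory Defs
  imports Complex_Main "HOL-Computational_Algebra.Primes"
begin

definition good :: "int \<Rightarrow> int \<Rightarrow> nat set" where
  "good x y = {n. n > 0 \<and> (\<exists>k>0. int n dvd x ^ k + y ^ k)}"

definition ell_part :: "nat \<Rightarrow> nat \<Rightarrow> nat" where
  "ell_part g L = (\<Prod>p\<in>{p\<in>prime_factors L. \<not> p dvd g}. p ^ multiplicity p L)"

definition gamma_exp :: "nat \<Rightarrow> nat \<Rightarrow> nat" where
  "gamma_exp g L = Max (insert 0
     {nat \<lceil>real (multiplicity p L) / real (multiplicity p g)\<rceil> | p. prime p \<and> p dvd g})"

end

theory Submission imports Defs "HOL-Number_Theory.Cong" begin

lemma odd_sum_dvd:
  fixes x y :: int assumes "odd t"
  shows "(x + y) dvd x ^ t + y ^ t"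
proof -
  have "[x = -y] (mod (x + y))" by (simp add: cong_iff_dvd_diff)
  then have "[x ^ t = (-y) ^ t] (mod (x + y))" by (rule cong_pow)
  then have "[x ^ t + y ^ t = (-y) ^ t + y ^ t] (mod (x + y))" by (rule cong_add) simp
  then show ?thesis using assms by (simp add: cong_0_iff)
qed

lemma mult_prod_pp:
  fixes p :: nat
  assumes "finite S" "\<And>q. q \<in> S \<Longrightarrow> prime q" "prime p"
  shows "multiplicity p (\<Prod>q\<in>S. q ^ f q) = (if p \<in> S then f p else 0)"
proof -
  have "multiplicity p (\<Prod>q\<in>S. q ^ f q) = (\<Sum>q\<in>S. multiplicity p (q ^ f q))"
    using assms by (intro prime_elem_multiplicity_prod_distrib) (auto, metis not_prime_0)
  also have "\<dots> = (\<Sum>q\<in>S. if q = p then f p else 0)"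
    using assms by (intro sum.cong refl) (auto simp: multiplicity_distinct_prime_power)
  also have "\<dots> = (if p \<in> S then f p else 0)" using assms(1) by simp
  finally show ?thesis .
qed

lemma ell_facts:
  fixes G L :: nat assumes "L > 0"
  shows "ell_part G L > 0"
    and "\<And>p. prime p \<Longrightarrow> \<not> p dvd G \<Longrightarrow> multiplicity p (ell_part G L) = multiplicity p L"
    and "ell_part G L dvd L"
    and "coprime (ell_part G L) G"
proof -
  let ?S = "{p\<in>prime_factors L. \<not> p dvd G}"
  have fin: "finite ?S" by simp
  have pr: "\<And>q. q \<in> ?S \<Longrightarrow> prime q" by auto
  show "ell_part G L > 0" unfolding ell_part_def
    by (intro prod_pos) (auto dest: prime_gt_0_nat in_prime_factors_imp_prime)
  have m: "multiplicity p (ell_part G L) = (if p \<in> ?S then multiplicity p L else 0)" if "prime p" for p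
    unfolding ell_part_def using mult_prod_pp[OF fin pr that] by simp
  show "multiplicity p (ell_part G L) = multiplicity p L" if "prime p" "\<not> p dvd G" for p
    using m[OF that(1)] that assms
    by (auto simp: prime_factors_multiplicity)
  show "ell_part G L dvd L"
    using \<open>ell_part G L > 0\<close> m by (intro multiplicity_le_imp_dvd) auto
  show "coprime (ell_part G L) G" unfolding ell_part_def
    by (auto intro!: prod_coprime_left simp: coprime_power_left_iff prime_imp_coprime dest: in_prime_factors_imp_prime)
qed

lemma gamma_bound:
  fixes G L :: nat
  assumes "G > 0" "prime p" "p dvd G" "\<kappa> \<ge> gamma_exp G L"
  shows "multiplicity p L \<le> \<kappa> * multiplicity p G"
proof -
  have fin: "finite {p. prime p \<and> p dvd G}"
    by (rule finite_subset[of _ "{..G}"]) (auto dest: dvd_imp_le simp: assms(1))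
  let ?c = "nat \<lceil>real (multiplicity p L) / real (multiplicity p G)\<rceil>"
  have "?c \<le> gamma_exp G L" unfolding gamma_exp_def
    using fin assms(2,3) by (intro Max_ge) auto
  with assms have c: "?c \<le> \<kappa>" by linarith
  have pos: "multiplicity p G > 0" using assms
    by (simp add: prime_multiplicity_gt_zero_iff)
  have "real (multiplicity p L) / real (multiplicity p G) \<le> real ?c"
  proof -
    have "0 \<le> real (multiplicity p L) / real (multiplicity p G)" by simp
    then have "0 \<le> \<lceil>real (multiplicity p L) / real (multiplicity p G)\<rceil>" by (simp only: zero_le_ceiling)
    then have "real ?c = real_of_int \<lceil>real (multiplicity p L) / real (multiplicity p G)\<rceil>"
      by (simp only: of_nat_nat)
    then show ?thesis using le_of_int_ceiling by metis
  qed
  also have "\<dots> \<le> real \<kappa>" using c by (simp only: of_nat_le_iff)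
  finally have "real (multiplicity p L) \<le> real \<kappa> * real (multiplicity p G)"
    using pos by (simp add: divide_le_eq)
  then show ?thesis by (simp flip: of_nat_mult)
qed

lemma L_dvd:
  fixes G L :: nat
  assumes "G > 0" "L > 0" "\<kappa> \<ge> gamma_exp G L"
  shows "L dvd ell_part G L * G ^ \<kappa>"
proof (rule multiplicity_le_imp_dvd)
  show "L \<noteq> 0" using assms by simp
  fix p :: nat assume p: "prime p"
  have e: "ell_part G L > 0" using ell_facts(1)[OF assms(2)] .
  have m: "multiplicity p (ell_part G L * G ^ \<kappa>) = multiplicity p (ell_part G L) + \<kappa> * multiplicity p G"
    using p e assms(1) by (simp add: prime_elem_multiplicity_mult_distrib prime_elem_multiplicity_power_distrib)
  show "multiplicity p L \<le> multiplicity p (ell_part G L * G ^ \<kappa>)"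
  proof (cases "p dvd G")
    case True then show ?thesis using gamma_bound[OF assms(1) p True assms(3)] m by simp
  next
    case False then show ?thesis using ell_facts(2)[OF assms(2) p False] m by simp
  qed
qed

theorem theorem3p4:
  fixes A B a b g :: int and L :: nat
  assumes "A \<noteq> 0" and "B \<noteq> 0"
    and "g = gcd A B" and "A = g * a" and "B = g * b"
    and "L \<ge> 2"
  shows "(L \<in> good A B \<longleftrightarrow>
            (\<exists>\<kappa>::nat. \<kappa> > 0 \<and> \<kappa> \<ge> gamma_exp (nat g) L \<and>
               int (ell_part (nat g) L) dvd a ^ \<kappa> + b ^ \<kappa>))
       \<and> (L \<in> good A B \<longleftrightarrow> ell_part (nat g) L \<in> good a b)"
proof -
  define G where "G = nat g"
  have gG: "g = int G" using assms(3) G_def by simp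
  have Gpos: "G > 0"
  proof -
    have "gcd A B \<noteq> 0" using assms(1) by simp
    then have "int G \<noteq> 0" using assms(3) gG by metis
    then show ?thesis by simp
  qed
  have Lpos: "L > 0" using assms(6) by simp
  define l where "l = ell_part G L"
  have lpos: "l > 0" using ell_facts(1)[OF Lpos] l_def by simp
  have ldvd: "int l dvd int L" using ell_facts(3)[OF Lpos] l_def by simp
  have lcop: "coprime (int l) g" using ell_facts(4)[OF Lpos] l_def gG by simp
  have AB: "A ^ k + B ^ k = g ^ k * (a ^ k + b ^ k)" for k
    using assms(4,5) by (simp add: power_mult_distrib algebra_simps)
  define P where "P = (\<exists>k>0. int l dvd a ^ k + b ^ k)"
  have goodl: "l \<in> good a b \<longleftrightarrow> P" using lpos unfolding good_def P_def by simp
  have one: "L \<in> good A B \<longleftrightarrow> P"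
  proof
    assume "L \<in> good A B"
    then obtain k where k: "k > 0" "int L dvd A ^ k + B ^ k" unfolding good_def by auto
    have "int l dvd g ^ k * (a ^ k + b ^ k)" using dvd_trans[OF ldvd k(2)] AB by simp
    moreover have "coprime (int l) (g ^ k)" using lcop by simp
    ultimately have "int l dvd a ^ k + b ^ k" using coprime_dvd_mult_right_iff by blast
    then show P using k(1) P_def by auto
  next
    assume P
    then obtain k where k: "k > 0" "int l dvd a ^ k + b ^ k" unfolding P_def by auto
    define \<kappa> where "\<kappa> = k * (2 * gamma_exp G L + 1)"
    have kg: "\<kappa> \<ge> gamma_exp G L"
    proof -
      have "1 * (2 * gamma_exp G L + 1) \<le> k * (2 * gamma_exp G L + 1)"
        using k(1) by (intro mult_le_mono1) simp
      then show ?thesis by (simp add: \<kappa>_def)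
    qed
    have "a ^ k + b ^ k dvd (a ^ k) ^ (2 * gamma_exp G L + 1) + (b ^ k) ^ (2 * gamma_exp G L + 1)"
      by (rule odd_sum_dvd) simp
    from dvd_trans[OF k(2) this] have "int l dvd a ^ \<kappa> + b ^ \<kappa>" unfolding \<kappa>_def
      by (simp only: power_mult)
    then have h1: "int l * g ^ \<kappa> dvd g ^ \<kappa> * (a ^ \<kappa> + b ^ \<kappa>)" by (simp add: mult.commute)
    have "int L dvd int (l * G ^ \<kappa>)" using L_dvd[OF Gpos Lpos kg] l_def
      by (simp only: of_nat_dvd_iff)
    then have h2: "int L dvd int l * g ^ \<kappa>" using gG by simp
    have "int L dvd A ^ \<kappa> + B ^ \<kappa>" using dvd_trans[OF h2 h1] AB[of \<kappa>] by simp
    moreover have "\<kappa> > 0" using k(1) \<kappa>_def by simp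
    ultimately show "L \<in> good A B" using Lpos unfolding good_def by auto
  qed
  have two: "P \<longleftrightarrow> (\<exists>\<kappa>::nat. \<kappa> > 0 \<and> \<kappa> \<ge> gamma_exp G L \<and> int l dvd a ^ \<kappa> + b ^ \<kappa>)"
  proof
    assume P
    then obtain k where k: "k > 0" "int l dvd a ^ k + b ^ k" unfolding P_def by auto
    define \<kappa> where "\<kappa> = k * (2 * gamma_exp G L + 1)"
    have kg: "\<kappa> \<ge> gamma_exp G L"
    proof -
      have "1 * (2 * gamma_exp G L + 1) \<le> k * (2 * gamma_exp G L + 1)"
        using k(1) by (intro mult_le_mono1) simp
      then show ?thesis by (simp add: \<kappa>_def)
    qed
    have "a ^ k + b ^ k dvd (a ^ k) ^ (2 * gamma_exp G L + 1) + (b ^ k) ^ (2 * gamma_exp G L + 1)"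
      by (rule odd_sum_dvd) simp
    from dvd_trans[OF k(2) this] have "int l dvd a ^ \<kappa> + b ^ \<kappa>" unfolding \<kappa>_def
      by (simp only: power_mult)
    moreover have "\<kappa> > 0" using k(1) \<kappa>_def by simp
    ultimately show "\<exists>\<kappa>::nat. \<kappa> > 0 \<and> \<kappa> \<ge> gamma_exp G L \<and> int l dvd a ^ \<kappa> + b ^ \<kappa>"
      using kg by blast
  qed (auto simp: P_def)
  show ?thesis using one two goodl unfolding G_def l_def by blast
qed

end
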